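(* Let $n>2k$ be integers with $k\ge 2$, $X=\{1,\dots,n\}$, let $\mathcal F\subset\binom{X}{k}$ be a saturated intersecting family, $\mathcal B=\mathcal B(\mathcal F)$, and $t=\min\{|B|\colon B\in\mathcal B\}$, and assume $t\ge 2$. For $t\le \ell\le k$ let $\mathcal F_\ell$ be the set of $F\in\mathcal F$ with $\max\{|B|\colon B\in\mathcal B,\ B\subset F\}=\ell$, and let $$\mathcal I_\ell=\{F\cap F'\colon F\in\mathcal F_\ell,\ F'\in\mathcal F_t\cup\dots\cup\mathcal F_\ell\}.$$ Then for every $\ell$ with $t\le\ell\le k$ and $\tau(\mathcal B^{(\le\ell)})\ge 2$, $$|\mathcal I_\ell|\le (2^\ell-1)\,|\mathcal B^{(\ell)}|\sum_{0\le i\le k-\ell}\binom{n}{i} < 2^\ell\,\ell^2 k^{\ell-2}\sum_{0\le i\le k-\ell}\binom{n}{i}.$$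
   Context: $\binom{X}{k}$ is the family of $k$-subsets of $X$. A family is intersecting if any two of its members intersect. For $\mathcal G\subset 2^X$, $\mathcal T(\mathcal G):=\{T\subset X\colon |T|\le k,\ T\cap G\neq\emptyset \text{ for all } G\in\mathcal G\}$. An intersecting family $\mathcal F\subset\binom{X}{k}$ is saturated if for every $G\in\binom{X}{k}\setminus\mathcal F$ the family $\mathcal F\cup\{G\}$ is not intersecting. $\mathcal B(\mathcal F)$ denotes the family of inclusion-minimal members of $\mathcal T(\mathcal F)$. For a family $\mathcal H$, $\mathcal H^{(i)}:=\{H\in\mathcal H\colon |H|=i\}$ and $\mathcal H^{(\le \ell)}:=\bigcup_{i=1}^{\ell}\mathcal H^{(i)}$. The covering number $\tau(\mathcal H)$ is the minimum size of a set $T$ with $T\cap H\neq\emptyset$ for all $H\in\mathcal H$. *)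

theory Defs
  imports Main
begin

definition intersecting :: "'a set set \<Rightarrow> bool" where
  "intersecting \<F> \<longleftrightarrow> (\<forall>A\<in>\<F>. \<forall>B\<in>\<F>. A \<inter> B \<noteq> {})"

definition ksubsets :: "'a set \<Rightarrow> nat \<Rightarrow> 'a set set" where
  "ksubsets X k = {A. A \<subseteq> X \<and> card A = k}"

definition saturated :: "'a set \<Rightarrow> nat \<Rightarrow> 'a set set \<Rightarrow> bool" where
  "saturated X k \<F> \<longleftrightarrow> \<F> \<subseteq> ksubsets X k \<and> intersecting \<F> \<and>
     (\<forall>G \<in> ksubsets X k - \<F>. \<not> intersecting (\<F> \<union> {G}))"

definition transv :: "'a set \<Rightarrow> nat \<Rightarrow> 'a set set \<Rightarrow> 'a set set" where
  "transv X k \<G> = {T. T \<subseteq> X \<and> card T \<le> k \<and> (\<forall>G\<in>\<G>. T \<inter> G \<noteq> {})}"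

definition minTransv :: "'a set \<Rightarrow> nat \<Rightarrow> 'a set set \<Rightarrow> 'a set set" where
  "minTransv X k \<F> = {T \<in> transv X k \<F>. \<forall>S \<in> transv X k \<F>. S \<subseteq> T \<longrightarrow> S = T}"

definition layer :: "'a set set \<Rightarrow> nat \<Rightarrow> 'a set set" where
  "layer \<H> i = {H \<in> \<H>. card H = i}"

definition layer_le :: "'a set set \<Rightarrow> nat \<Rightarrow> 'a set set" where
  "layer_le \<H> l = {H \<in> \<H>. 1 \<le> card H \<and> card H \<le> l}"

definition cover_number :: "'a set set \<Rightarrow> nat" where
  "cover_number \<H> = (LEAST m. \<exists>T. finite T \<and> card T = m \<and> (\<forall>H\<in>\<H>. T \<inter> H \<noteq> {}))"

end

theory Submission
  imports Defs
begin

lemma exists_minT: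
  assumes "T \<in> transv X k G" "finite X"
  shows "\<exists>B\<in>minTransv X k G. B \<subseteq> T"
proof -
  let ?P = "\<lambda>S. S \<in> transv X k G \<and> S \<subseteq> T"
  obtain S0 where S0: "?P S0" "\<forall>S. ?P S \<longrightarrow> card S0 \<le> card S"
    using ex_has_least_nat[of ?P T card] assms(1) by blast
  have finS0: "finite S0" using S0(1) assms(2) unfolding transv_def by (blast intro: finite_subset)
  have "S0 \<in> minTransv X k G"
    unfolding minTransv_def
  proof (intro CollectI conjI ballI impI)
    show "S0 \<in> transv X k G" using S0 by blast
    fix S assume "S \<in> transv X k G" "S \<subseteq> S0"
    then have "card S0 \<le> card S" using S0 by blast
    then show "S = S0" using \<open>S \<subseteq> S0\<close> finS0 by (metis card_seteq)
  qed
  then show ?thesis using S0 by blast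
qed

lemma transv_intersecting:
  assumes sat: "saturated X k F" and finX: "finite X" and "2*k \<le> card X" and "k \<ge> 1"
    and B1: "B1 \<in> transv X k F" and B2: "B2 \<in> transv X k F"
  shows "B1 \<inter> B2 \<noteq> {}"
proof
  assume disj: "B1 \<inter> B2 = {}"
  have sub1: "B1 \<subseteq> X" "card B1 \<le> k" and sub2: "B2 \<subseteq> X" "card B2 \<le> k"
    using B1 B2 unfolding transv_def by auto
  have fin1: "finite B1" and fin2: "finite B2" using sub1 sub2 finX finite_subset by auto
  have cu: "card (B1 \<union> B2) = card B1 + card B2" using card_Un_disjoint fin1 fin2 disj by blast
  have "card (X - (B1 \<union> B2)) = card X - card (B1 \<union> B2)"
    using card_Diff_subset[of "B1 \<union> B2" X] fin1 fin2 sub1 sub2 by auto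
  then have "k - card B1 \<le> card (X - (B1 \<union> B2))" using cu sub1 sub2 assms(3) by linarith
  then obtain E where E: "E \<subseteq> X - (B1 \<union> B2)" "card E = k - card B1" "finite E"
    by (meson obtain_subset_with_card_n)
  define G where "G = B1 \<union> E"
  have "card G = card B1 + card E" unfolding G_def
    using E fin1 by (intro card_Un_disjoint) auto
  then have cG: "card G = k" using E sub1 by simp
  have GX: "G \<subseteq> X" using E sub1 unfolding G_def by auto
  have Gk: "G \<in> ksubsets X k" using cG GX unfolding ksubsets_def by auto
  have Gmeets: "\<forall>A\<in>F. A \<inter> G \<noteq> {}" using B1 unfolding transv_def G_def by blast
  have Gne: "G \<noteq> {}" using cG assms(4) by auto
  have intF: "intersecting F" using sat unfolding saturated_def by blast
  have "intersecting (F \<union> {G})"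
    unfolding intersecting_def
  proof (intro ballI)
    fix A B assume "A \<in> F \<union> {G}" "B \<in> F \<union> {G}"
    then show "A \<inter> B \<noteq> {}" using intF Gmeets Gne unfolding intersecting_def by blast
  qed
  then have "G \<in> F" using sat Gk unfolding saturated_def by blast
  then have "B2 \<inter> G \<noteq> {}" using B2 unfolding transv_def by blast
  moreover have "B2 \<inter> G = {}" using disj E unfolding G_def by blast
  ultimately show False by blast
qed

lemma step:
  assumes "finite \<S>" "\<forall>S\<in>\<S>. finite S \<and> card S = j" "\<forall>B\<in>P. \<exists>S\<in>\<S>. S \<subseteq> B"
    and A: "\<forall>S\<in>\<S>. \<exists>A. finite A \<and> card A \<le> m \<and> A \<inter> S = {} \<and> (\<forall>B\<in>P. S \<subseteq> B \<longrightarrow> A \<inter> B \<noteq> {})"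
  shows "\<exists>\<S>'. finite \<S>' \<and> card \<S>' \<le> m * card \<S> \<and> (\<forall>S\<in>\<S>'. finite S \<and> card S = Suc j)
     \<and> (\<forall>B\<in>P. \<exists>S\<in>\<S>'. S \<subseteq> B)"
proof -
  from A obtain Af where Af: "\<forall>S\<in>\<S>. finite (Af S) \<and> card (Af S) \<le> m \<and> Af S \<inter> S = {} \<and> (\<forall>B\<in>P. S \<subseteq> B \<longrightarrow> Af S \<inter> B \<noteq> {})"
    by metis
  define S' where "S' = (\<Union>S\<in>\<S>. (\<lambda>x. insert x S) ` Af S)"
  have "finite S'" unfolding S'_def using assms(1) Af by auto
  moreover have "card S' \<le> m * card \<S>"
  proof -
    have "card S' \<le> (\<Sum>S\<in>\<S>. card ((\<lambda>x. insert x S) ` Af S))"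
      unfolding S'_def using assms(1) by (rule card_UN_le)
    also have "\<dots> \<le> (\<Sum>S\<in>\<S>. m)"
      proof (rule sum_mono)
      fix S assume "S \<in> \<S>"
      then have "finite (Af S)" "card (Af S) \<le> m" using Af by auto
      then show "card ((\<lambda>x. insert x S) ` Af S) \<le> m" using card_image_le le_trans by blast
    qed
    finally show ?thesis by (simp add: mult.commute)
  qed
  moreover have "\<forall>S\<in>S'. finite S \<and> card S = Suc j"
    unfolding S'_def using Af assms(2) by (auto simp: disjoint_iff)
  moreover have "\<forall>B\<in>P. \<exists>S\<in>S'. S \<subseteq> B"
  proof
    fix B assume "B \<in> P"
    then obtain S where "S \<in> \<S>" "S \<subseteq> B" using assms(3) by blast
    then obtain x where "x \<in> Af S" "x \<in> B" using Af \<open>B \<in> P\<close> by blast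
    then show "\<exists>S\<in>S'. S \<subseteq> B" unfolding S'_def using \<open>S \<in> \<S>\<close> \<open>S \<subseteq> B\<close> by blast
  qed
  ultimately show ?thesis by blast
qed


fun bnd :: "nat \<Rightarrow> nat \<Rightarrow> nat \<Rightarrow> nat" where
  "bnd l k 0 = 1"
| "bnd l k (Suc j) = (if j < 2 then l else k) * bnd l k j"

lemma bnd_SS: "bnd l k (Suc (Suc j)) = l * l * k ^ j"
  by (induction j) (auto simp: mult.commute mult.left_commute)

theorem lemma3p1:
  fixes n k t l :: nat and \<F> \<B> :: "nat set set"
  and Fl :: "nat \<Rightarrow> nat set set" and \<I> :: "nat set set"
  assumes "k \<ge> 2" and "n > 2 * k"
    and sat: "saturated {1..n} k \<F>"
    and B_def: "\<B> = minTransv {1..n} k \<F>"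
    and t_def: "t = Min (card ` \<B>)"
    and "t \<ge> 2"
    and Fl_def: "\<And>j. Fl j = {F \<in> \<F>. Max {card B | B. B \<in> \<B> \<and> B \<subseteq> F} = j}"
    and I_def: "\<I> = {F \<inter> F' | F F'. F \<in> Fl l \<and> F' \<in> (\<Union>j\<in>{t..l}. Fl j)}"
    and "t \<le> l" and "l \<le> k"
    and "cover_number (layer_le \<B> l) \<ge> 2"
  shows "card \<I> \<le> (2 ^ l - 1) * card (layer \<B> l) * (\<Sum>i\<in>{0..k - l}. n choose i)
       \<and> (2 ^ l - 1) * card (layer \<B> l) * (\<Sum>i\<in>{0..k - l}. n choose i)
           < 2 ^ l * l ^ 2 * k ^ (l - 2) * (\<Sum>i\<in>{0..k - l}. n choose i)"
proof -
  let ?X = "{1..n}"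
  have finX: "finite ?X" by simp
  have cX: "card ?X = n" by simp
  have Fsub: "\<forall>F\<in>\<F>. F \<subseteq> ?X \<and> card F = k"
    using sat unfolding saturated_def ksubsets_def by blast
  have intF: "intersecting \<F>" using sat unfolding saturated_def by blast
  have Ftrans: "\<forall>F\<in>\<F>. F \<in> transv ?X k \<F>"
    using Fsub intF unfolding transv_def intersecting_def by auto
  have Btrans: "\<B> \<subseteq> transv ?X k \<F>" unfolding B_def minTransv_def by blast
  have BX: "\<forall>B\<in>\<B>. B \<subseteq> ?X \<and> card B \<le> k" using Btrans unfolding transv_def by blast
  have Bint: "\<forall>B1\<in>\<B>. \<forall>B2\<in>\<B>. B1 \<inter> B2 \<noteq> {}"
  proof (intro ballI)
    fix B1 B2 assume "B1 \<in> \<B>" "B2 \<in> \<B>"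
    moreover have "2 * k \<le> card ?X" using cX assms(2) by linarith
    moreover have "k \<ge> 1" using assms(1) by linarith
    ultimately show "B1 \<inter> B2 \<noteq> {}"
      using transv_intersecting[OF sat finX] Btrans by blast
  qed
  have Bmeets: "\<forall>B\<in>\<B>. \<forall>F\<in>\<F>. B \<inter> F \<noteq> {}" using Btrans unfolding transv_def by blast
  have l2: "l \<ge> 2" using assms by linarith
  let ?P = "layer \<B> l"
  have PB: "?P \<subseteq> \<B>" unfolding layer_def by blast
  have "?P \<subseteq> Pow ?X" using BX PB by blast
  then have finP: "finite ?P" using finX by (meson finite_Pow_iff finite_subset)
  have Pcard: "\<forall>B\<in>?P. card B = l" unfolding layer_def by blast
  have Pfin: "\<forall>B\<in>?P. finite B" using BX PB finite_subset[OF _ finX] by blast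
  define s where "s = (\<Sum>i\<in>{0..k - l}. n choose i)"
  define Sub where "Sub = {T. T \<subseteq> ?X \<and> card T \<le> k - l}"
  define U where "U = (\<Union>B\<in>?P. \<Union>S\<in>Pow B - {{}}. (\<lambda>T. S \<union> T) ` Sub)"
  have IU: "\<I> \<subseteq> U"
  proof
    fix x assume "x \<in> \<I>"
    then obtain F F' j where x: "x = F \<inter> F'" and F: "F \<in> Fl l" and F': "F' \<in> Fl j"
      unfolding I_def by blast
    have FF: "F \<in> \<F>" and MF: "Max {card B | B. B \<in> \<B> \<and> B \<subseteq> F} = l"
      using F Fl_def by auto
    have FF': "F' \<in> \<F>" using F' Fl_def by auto
    obtain B0 where "B0 \<in> \<B>" "B0 \<subseteq> F" using exists_minT[OF _ finX] Ftrans FF B_def by blast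
    then have ne: "{card B | B. B \<in> \<B> \<and> B \<subseteq> F} \<noteq> {}" by blast
    have finF: "finite F" using Fsub FF finite_subset[OF _ finX] by blast
    have "{card B | B. B \<in> \<B> \<and> B \<subseteq> F} \<subseteq> {..card F}"
      using card_mono[OF finF] by auto
    then have fM: "finite {card B | B. B \<in> \<B> \<and> B \<subseteq> F}" using finite_subset by blast
    have "l \<in> {card B | B. B \<in> \<B> \<and> B \<subseteq> F}" using Max_in[OF fM ne] MF by simp
    then obtain B where B: "B \<in> \<B>" "B \<subseteq> F" "card B = l" by blast
    have BP: "B \<in> ?P" using B unfolding layer_def by blast
    have S: "B \<inter> F' \<in> Pow B - {{}}" using Bmeets B FF' by blast
    have "card (F - B) = k - l" using B finF Fsub FF by (simp add: card_Diff_subset finite_subset)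
    then have "card ((F - B) \<inter> F') \<le> k - l"
      by (metis card_mono finF finite_Diff inf_le1)
    then have T: "(F - B) \<inter> F' \<in> Sub" unfolding Sub_def using Fsub FF by blast
    have "x = (B \<inter> F') \<union> ((F - B) \<inter> F')" using x B by blast
    then show "x \<in> U" unfolding U_def using BP S T by blast
  qed
  have finU: "finite U"
  proof (rule finite_subset[of _ "Pow ?X"])
    show "U \<subseteq> Pow ?X" unfolding U_def Sub_def using BX PB by blast
  qed simp
  have cSub: "card Sub \<le> s"
  proof -
    have "Sub = (\<Union>i\<in>{0..k-l}. {T. T \<subseteq> ?X \<and> card T = i})" unfolding Sub_def by auto
    then have "card Sub \<le> (\<Sum>i\<in>{0..k-l}. card {T. T \<subseteq> ?X \<and> card T = i})"
      using card_UN_le[of "{0..k-l}"] by simp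
    also have "\<dots> = s" unfolding s_def using n_subsets[OF finX] cX by simp
    finally show ?thesis .
  qed
  have "card \<I> \<le> card U" using IU finU card_mono by blast
  also have "card U \<le> (\<Sum>B\<in>?P. card (\<Union>S\<in>Pow B - {{}}. (\<lambda>T. S \<union> T) ` Sub))"
    unfolding U_def using finP by (rule card_UN_le)
  also have "\<dots> \<le> (\<Sum>B\<in>?P. (2 ^ l - 1) * s)"
  proof (rule sum_mono)
    fix B assume BP: "B \<in> ?P"
    have fB: "finite B" and cB: "card B = l" using BP Pfin Pcard by auto
    have cPow: "card (Pow B - {{}}) = 2 ^ l - 1"
      using fB cB by (simp add: card_Diff_singleton card_Pow)
    have "card (\<Union>S\<in>Pow B - {{}}. (\<lambda>T. S \<union> T) ` Sub) \<le> (\<Sum>S\<in>Pow B - {{}}. card ((\<lambda>T. S \<union> T) ` Sub))"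
      using fB by (intro card_UN_le) simp
    also have "\<dots> \<le> (\<Sum>S\<in>Pow B - {{}}. s)"
    proof (rule sum_mono)
      fix S
      have "card ((\<lambda>T. S \<union> T) ` Sub) \<le> card Sub" by (rule card_image_le) (simp add: Sub_def)
      then show "card ((\<lambda>T. S \<union> T) ` Sub) \<le> s" using cSub by linarith
    qed
    also have "\<dots> = (2 ^ l - 1) * s" using cPow by simp
    finally show "card (\<Union>S\<in>Pow B - {{}}. (\<lambda>T. S \<union> T) ` Sub) \<le> (2 ^ l - 1) * s" .
  qed
  also have "\<dots> = (2 ^ l - 1) * card ?P * s" by simp
  finally have part1: "card \<I> \<le> (2 ^ l - 1) * card ?P * s" .
  have ne_le: "layer_le \<B> l \<noteq> {}"
  proof
    assume "layer_le \<B> l = {}"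
    then have "cover_number (layer_le \<B> l) = 0" unfolding cover_number_def
      by (intro Least_eq_0) (rule exI[of _ "{}"], simp)
    then show False using assms by simp
  qed
  have avoid: "\<forall>x. \<exists>H\<in>layer_le \<B> l. x \<notin> H"
  proof (rule ccontr)
    assume "\<not> ?thesis"
    then obtain x where x: "\<forall>H\<in>layer_le \<B> l. x \<in> H" by blast
    have "cover_number (layer_le \<B> l) \<le> 1" unfolding cover_number_def
      by (rule Least_le) (rule exI[of _ "{x}"], use x in auto)
    then show False using assms by simp
  qed
  have LB: "\<forall>H\<in>layer_le \<B> l. H \<in> \<B> \<and> finite H \<and> card H \<le> l"
    unfolding layer_le_def using BX finite_subset[OF _ finX] by blast
  have claim: "j \<le> l \<Longrightarrow> \<exists>\<S>. finite \<S> \<and> card \<S> \<le> bnd l k j \<and> (\<forall>S\<in>\<S>. finite S \<and> card S = j)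
      \<and> (\<forall>B\<in>?P. \<exists>S\<in>\<S>. S \<subseteq> B)" for j
  proof (induction j)
    case 0
    show ?case by (rule exI[of _ "{{}}"]) simp
  next
    case (Suc j)
    then obtain \<S> where S: "finite \<S>" "card \<S> \<le> bnd l k j" "\<forall>S\<in>\<S>. finite S \<and> card S = j"
      "\<forall>B\<in>?P. \<exists>S\<in>\<S>. S \<subseteq> B" by auto
    define m where "m = (if j < 2 then l else k)"
    have A: "\<forall>S\<in>\<S>. \<exists>A. finite A \<and> card A \<le> m \<and> A \<inter> S = {} \<and> (\<forall>B\<in>?P. S \<subseteq> B \<longrightarrow> A \<inter> B \<noteq> {})"
    proof
      fix S assume SS: "S \<in> \<S>"
      show "\<exists>A. finite A \<and> card A \<le> m \<and> A \<inter> S = {} \<and> (\<forall>B\<in>?P. S \<subseteq> B \<longrightarrow> A \<inter> B \<noteq> {})"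
      proof (cases "j < 2")
        case True
        have "\<exists>H\<in>layer_le \<B> l. H \<inter> S = {}"
        proof (cases "j = 0")
          case True
          then show ?thesis using ne_le SS S(3) by auto
        next
          case False
          then have "card S = 1" using \<open>j < 2\<close> SS S(3) by auto
          then obtain x where "S = {x}" using card_1_singletonE by blast
          then show ?thesis using avoid by auto
        qed
        then obtain H where H: "H \<in> layer_le \<B> l" "H \<inter> S = {}" by blast
        show ?thesis
          by (rule exI[of _ H]) (use H LB True m_def PB Bint in auto)
      next
        case False
        show ?thesis
        proof (cases "\<exists>B\<in>?P. S \<subseteq> B")
          case True
          then obtain B where B: "B \<in> ?P" "S \<subseteq> B" by blast
          have "card S < card B" using B Pcard SS S(3) Suc.prems by auto
          then have SB: "S \<noteq> B" by auto
          have BM: "B \<in> minTransv ?X k \<F>" using B PB B_def by blast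
          have "S \<notin> transv ?X k \<F>"
            using BM SB B(2) unfolding minTransv_def by blast
          moreover have "S \<subseteq> ?X" "card S \<le> k" using B BX PB \<open>card S < card B\<close> Pcard \<open>l \<le> k\<close> by auto
          ultimately obtain F where F: "F \<in> \<F>" "S \<inter> F = {}" unfolding transv_def by blast
          have "finite F" "card F = k" using F Fsub finite_subset[OF _ finX] by auto
          then show ?thesis
          proof (intro exI[of _ F] conjI ballI impI)
            show "card F \<le> m" using \<open>card F = k\<close> \<open>\<not> j < 2\<close> m_def by simp
            show "F \<inter> S = {}" using F by blast
            fix B' assume "B' \<in> ?P"
            then show "F \<inter> B' \<noteq> {}" using F PB Bmeets by blast
          qed
        next
          case False
          then show ?thesis by (intro exI[of _ "{}"]) auto
        qed
      qed
    qed
    obtain \<S>' where S': "finite \<S>'" "card \<S>' \<le> m * card \<S>" "\<forall>S\<in>\<S>'. finite S \<and> card S = Suc j"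
      "\<forall>B\<in>?P. \<exists>S\<in>\<S>'. S \<subseteq> B"
      using step[OF S(1) S(3) S(4) A] by blast
    have "m * card \<S> \<le> m * bnd l k j" using S(2) by (rule mult_le_mono2)
    then have "card \<S>' \<le> m * bnd l k j" using S'(2) by linarith
    then have "card \<S>' \<le> bnd l k (Suc j)" using m_def by simp
    then show ?case using S' by blast
  qed
  obtain \<S> where S: "finite \<S>" "card \<S> \<le> bnd l k l" "\<forall>S\<in>\<S>. finite S \<and> card S = l"
      "\<forall>B\<in>?P. \<exists>S\<in>\<S>. S \<subseteq> B" using claim[of l] by blast
  have "?P \<subseteq> \<S>"
  proof
    fix B assume B: "B \<in> ?P"
    then obtain S where "S \<in> \<S>" "S \<subseteq> B" using S by blast
    moreover have "S = B" using calculation S(3) B Pcard Pfin card_subset_eq by metis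
    ultimately show "B \<in> \<S>" by simp
  qed
  then have "card ?P \<le> card \<S>" using S(1) by (intro card_mono)
  then have "card ?P \<le> bnd l k l" using S(2) by linarith
  moreover have "bnd l k l = l ^ 2 * k ^ (l - 2)"
  proof -
    have "l = Suc (Suc (l - 2))" using l2 by simp
    then have "bnd l k l = bnd l k (Suc (Suc (l - 2)))" by simp
    then show ?thesis using bnd_SS[of l k "l - 2"] by (simp add: power2_eq_square)
  qed
  ultimately have cP: "card ?P \<le> l ^ 2 * k ^ (l - 2)" by simp
  have Lpos: "l ^ 2 * k ^ (l - 2) > 0" using l2 assms(1) by simp
  have spos: "s > 0"
  proof -
    have "(n choose 0) \<le> s" unfolding s_def by (rule member_le_sum) auto
    then show ?thesis by simp
  qed
  have "(2 ^ l - 1) * card ?P \<le> (2 ^ l - 1) * (l ^ 2 * k ^ (l - 2))" using cP by simp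
  also have "\<dots> < 2 ^ l * (l ^ 2 * k ^ (l - 2))"
    by (rule mult_less_mono1) (use Lpos in auto)
  finally have "(2 ^ l - 1) * card ?P * s < 2 ^ l * (l ^ 2 * k ^ (l - 2)) * s"
    using spos by (rule mult_less_mono1)
  then show ?thesis using part1 unfolding s_def by (simp add: mult.assoc)
qed

end
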